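(* Let $(X,d_X)$ be a complete metric space. Suppose that $U$ is a process on $X$ with pullback attractor $\mathfrak{A}=\{A(t)\}_{t\in\mathbb{R}}$ and that $S$ is a semigroup on $X$ with global attractor $\mathcal{A}$. Assume that (i) $\mathfrak{A}$ is forward bounded, i.e. there is a bounded set $B\subset X$ such that $\bigcup_{t\geq 0}A(t)\subset B$; (ii) for every $T>0$, $$\lim_{t\to\infty}\sup_{x\in B} d_X\big(U(t+T,t,x),S(T,x)\big)=0.$$ Then $\lim_{t\to\infty}\operatorname{dist}\big(A(t),\mathcal{A}\big)=0$.
   Context: A process on $X$ is a map $U:\{(t,\tau)\in\mathbb{R}^2:t\geq\tau\}\times X\to X$ with $U(\tau,\tau,x)=x$ and $U(t,s,U(s,\tau,x))=U(t,\tau,x)$ for all $t\geq s\geq\tau$, $x\in X$ (no continuity is assumed). A pullback attractor of $U$ is a family $\mathfrak{A}=\{A(t)\}_{t\in\mathbb{R}}$ of nonempty compact subsets of $X$ which is invariant ($U(t,\tau,A(\tau))=A(t)$ for all $t\geq\tau$), pullback attracts every nonempty bounded set $D\subset X$ (i.e. $\lim_{s\to\infty}\operatorname{dist}(U(t,t-s,D),A(t))=0$ for every $t\in\mathbb{R}$), and is minimal among families with these properties. A semigroup on $X$ is a map $S:[0,\infty)\times X\to X$ with $S(0,x)=x$ and $S(t+s,x)=S(t,S(s,x))$; its global attractor $\mathcal{A}$ is a nonempty compact set with $S(t,\mathcal{A})=\mathcal{A}$ for all $t\geq0$ that attracts every bounded set $D$: $\lim_{t\to\infty}\operatorname{dist}(S(t,D),\mathcal{A})=0$.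 Here $\operatorname{dist}(A,B)=\sup_{a\in A}\inf_{b\in B}d_X(a,b)$ is the Hausdorff semi-metric. *)

theory Defs
  imports "HOL-Analysis.Analysis" "HOL-Library.Extended_Real"
begin

text \<open>Hausdorff semi-distance dist(A,B) = sup over a in A of inf over b in B of d(a,b),
  valued in the extended reals so that unbounded suprema are represented faithfully.\<close>
definition hsemidist :: "'a::metric_space set \<Rightarrow> 'a set \<Rightarrow> ereal" where
  "hsemidist A B = (SUP a\<in>A. ereal (infdist a B))"

definition is_process :: "(real \<Rightarrow> real \<Rightarrow> 'a \<Rightarrow> 'a) \<Rightarrow> bool" where
  "is_process U \<longleftrightarrow>
     (\<forall>\<tau> x. U \<tau> \<tau> x = x) \<and>
     (\<forall>t s \<tau> x. t \<ge> s \<and> s \<ge> \<tau> \<longrightarrow> U t s (U s \<tau> x) = U t \<tau> x)"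

definition is_semigroup :: "(real \<Rightarrow> 'a \<Rightarrow> 'a) \<Rightarrow> bool" where
  "is_semigroup S \<longleftrightarrow>
     (\<forall>x. S 0 x = x) \<and>
     (\<forall>t s x. t \<ge> 0 \<and> s \<ge> 0 \<longrightarrow> S (t + s) x = S t (S s x))"

definition pullback_attracts_bdd ::
  "(real \<Rightarrow> real \<Rightarrow> 'a::metric_space \<Rightarrow> 'a) \<Rightarrow> (real \<Rightarrow> 'a set) \<Rightarrow> bool" where
  "pullback_attracts_bdd U A \<longleftrightarrow>
     (\<forall>D t. D \<noteq> {} \<and> bounded D \<longrightarrow>
        ((\<lambda>s. hsemidist (U t (t - s) ` D) (A t)) \<longlongrightarrow> 0) at_top)"

definition pb_attractor_candidate ::
  "(real \<Rightarrow> real \<Rightarrow> 'a::metric_space \<Rightarrow> 'a) \<Rightarrow> (real \<Rightarrow> 'a set) \<Rightarrow> bool" where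
  "pb_attractor_candidate U A \<longleftrightarrow>
     (\<forall>t. A t \<noteq> {} \<and> compact (A t)) \<and>
     (\<forall>t \<tau>. t \<ge> \<tau> \<longrightarrow> U t \<tau> ` A \<tau> = A t) \<and>
     pullback_attracts_bdd U A"

definition is_pullback_attractor ::
  "(real \<Rightarrow> real \<Rightarrow> 'a::metric_space \<Rightarrow> 'a) \<Rightarrow> (real \<Rightarrow> 'a set) \<Rightarrow> bool" where
  "is_pullback_attractor U A \<longleftrightarrow>
     pb_attractor_candidate U A \<and>
     (\<forall>C. pb_attractor_candidate U C \<longrightarrow> (\<forall>t. A t \<subseteq> C t))"

definition is_global_attractor ::
  "(real \<Rightarrow> 'a::metric_space \<Rightarrow> 'a) \<Rightarrow> 'a set \<Rightarrow> bool" where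
  "is_global_attractor S GA \<longleftrightarrow>
     GA \<noteq> {} \<and> compact GA \<and>
     (\<forall>t\<ge>0. S t ` GA = GA) \<and>
     (\<forall>D. D \<noteq> {} \<and> bounded D \<longrightarrow>
        ((\<lambda>t. hsemidist (S t ` D) GA) \<longlongrightarrow> 0) at_top)"

end

theory Submission
  imports Defs
begin

lemma ereal_tendsto0I:
  fixes f :: "real \<Rightarrow> ereal"
  assumes "\<forall>\<^sub>F t in at_top. 0 \<le> f t"
    and "\<And>e. e > 0 \<Longrightarrow> \<forall>\<^sub>F t in at_top. f t \<le> ereal e"
  shows "(f \<longlongrightarrow> 0) at_top"
proof (rule order_tendstoI)
  fix a :: ereal assume "a < 0"
  then show "\<forall>\<^sub>F t in at_top. a < f t" using assms(1)
    by (auto elim: eventually_mono)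
next
  fix u :: ereal assume "0 < u"
  then obtain e :: real where e: "0 < e" "ereal e < u"
    using ereal_dense2[OF \<open>0 < u\<close>] by (metis less_ereal.simps(1) ereal_dense2 order.strict_trans zero_ereal_def real_of_ereal_pos)
  show "\<forall>\<^sub>F t in at_top. f t < u"
    using assms(2)[OF e(1)] e(2) by (auto elim: eventually_mono)
qed

theorem theorem2p2:
  fixes U :: "real \<Rightarrow> real \<Rightarrow> 'a::complete_space \<Rightarrow> 'a"
    and S :: "real \<Rightarrow> 'a \<Rightarrow> 'a"
    and A :: "real \<Rightarrow> 'a set"
    and GA :: "'a set"
    and B :: "'a set"
  assumes "is_process U"
    and "is_pullback_attractor U A"
    and "is_semigroup S"
    and "is_global_attractor S GA"
    and "bounded B"
    and "(\<Union>t\<in>{0..}. A t) \<subseteq> B"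
    and "\<And>T. T > 0 \<Longrightarrow>
           ((\<lambda>t. SUP x\<in>B. ereal (dist (U (t + T) t x) (S T x))) \<longlongrightarrow> 0) at_top"
  shows "((\<lambda>t. hsemidist (A t) GA) \<longlongrightarrow> 0) at_top"
proof (rule ereal_tendsto0I)
  have Ane: "\<And>t. A t \<noteq> {}" and inv: "\<And>t \<tau>. t \<ge> \<tau> \<Longrightarrow> U t \<tau> ` A \<tau> = A t"
    using assms(2) unfolding is_pullback_attractor_def pb_attractor_candidate_def by auto
  have GAne: "GA \<noteq> {}" and GAatt: "\<And>D. D \<noteq> {} \<Longrightarrow> bounded D \<Longrightarrow>
        ((\<lambda>t. hsemidist (S t ` D) GA) \<longlongrightarrow> 0) at_top"
    using assms(4) unfolding is_global_attractor_def by auto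
  have Bne: "B \<noteq> {}" using Ane[of 0] assms(6) by auto
  show "\<forall>\<^sub>F t in at_top. 0 \<le> hsemidist (A t) GA"
  proof (intro always_eventually allI)
    fix t
    obtain a where "a \<in> A t" using Ane by blast
    then have "ereal (infdist a GA) \<le> hsemidist (A t) GA"
      unfolding hsemidist_def by (rule SUP_upper)
    moreover have "0 \<le> ereal (infdist a GA)" by (simp add: infdist_nonneg)
    ultimately show "0 \<le> hsemidist (A t) GA" using order.trans[of 0 "ereal (infdist a GA)" "hsemidist (A t) GA"] by blast
  qed
  fix e :: real assume e: "e > 0"
  have "\<forall>\<^sub>F T in at_top. hsemidist (S T ` B) GA < ereal (e/2)"
    using GAatt[OF Bne assms(5)] e by (intro order_tendstoD) auto
  moreover have "\<forall>\<^sub>F T in at_top. T > (0::real)" by (rule eventually_gt_at_top)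
  ultimately have "\<forall>\<^sub>F T in at_top. hsemidist (S T ` B) GA < ereal (e/2) \<and> T > 0"
    by (rule eventually_conj)
  then obtain N where "\<forall>T\<ge>N. hsemidist (S T ` B) GA < ereal (e/2) \<and> T > 0"
    unfolding eventually_at_top_linorder by blast
  then obtain T where T: "T > 0" "hsemidist (S T ` B) GA < ereal (e/2)" by blast
  have "\<forall>\<^sub>F t in at_top. (SUP x\<in>B. ereal (dist (U (t + T) t x) (S T x))) < ereal (e/2)"
    using assms(7)[OF T(1)] e by (intro order_tendstoD) auto
  moreover have "\<forall>\<^sub>F t in at_top. t \<ge> (0::real)" by (rule eventually_ge_at_top)
  ultimately have "\<forall>\<^sub>F t in at_top. (SUP x\<in>B. ereal (dist (U (t + T) t x) (S T x))) < ereal (e/2) \<and> t \<ge> 0"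
    by (rule eventually_conj)
  then obtain t0 where t0: "\<And>t. t \<ge> t0 \<Longrightarrow>
      (SUP x\<in>B. ereal (dist (U (t + T) t x) (S T x))) < ereal (e/2) \<and> t \<ge> 0"
    unfolding eventually_at_top_linorder by blast
  show "\<forall>\<^sub>F t in at_top. hsemidist (A t) GA \<le> ereal e"
    unfolding eventually_at_top_linorder
  proof (intro exI allI impI)
    fix t assume tt: "t \<ge> t0 + T"
    let ?s = "t - T"
    have s: "?s \<ge> t0" using tt by simp
    have hs: "(SUP x\<in>B. ereal (dist (U (?s + T) ?s x) (S T x))) < ereal (e/2)" and s0: "?s \<ge> 0"
      using t0[OF s] by auto
    have At: "A t = U t ?s ` A ?s" using inv[of ?s t] T by simp
    have AsB: "A ?s \<subseteq> B" using assms(6) s0 by (auto simp del: diff_ge_0_iff_ge)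
    show "hsemidist (A t) GA \<le> ereal e"
      unfolding hsemidist_def
    proof (rule SUP_least)
      fix a assume "a \<in> A t"
      then obtain x where x: "x \<in> B" "a = U t ?s x" using At AsB by auto
      have "ereal (dist (U (?s + T) ?s x) (S T x)) \<le> (SUP x\<in>B. ereal (dist (U (?s + T) ?s x) (S T x)))"
        using x(1) by (rule SUP_upper)
      then have "ereal (dist (U (?s + T) ?s x) (S T x)) < ereal (e/2)" using hs by (rule order.strict_trans1)
      then have d1: "dist a (S T x) < e/2" using x(2) by simp
      have "ereal (infdist (S T x) GA) \<le> hsemidist (S T ` B) GA"
        unfolding hsemidist_def using x(1) by (intro SUP_upper) auto
      then have "ereal (infdist (S T x) GA) < ereal (e/2)" using T(2) by (rule order.strict_trans1)
      then have d2: "infdist (S T x) GA < e/2" by simp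
      have "infdist a GA \<le> dist a (S T x) + infdist (S T x) GA"
        using infdist_triangle[of a GA "S T x"] by (simp add: add.commute)
      with d1 d2 show "ereal (infdist a GA) \<le> ereal e" by simp
    qed
  qed
qed

end
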